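(* Let $H$ be a bipartite multigraph with parts $A$ and $B$, both nonempty, and let $\alpha>0$. Suppose that for every nonempty subset $B'\subseteq B$, setting $A'=N(B')\subseteq A$, there exists a vertex $u\in A'$ with $d_{B'}(u)<\alpha$, where $d_{B'}(u)$ is the number of edges (with multiplicity) between $u$ and $B'$. Then $\alpha|A|>|B|$.
   Context: $N(B')$ denotes the set of vertices of $A$ adjacent to at least one vertex of $B'$. *)

theory Defs
  imports Complex_Main
begin

text \<open>A bipartite multigraph with parts A and B is given by a multiplicity
function mult :: 'a \<Rightarrow> 'b \<Rightarrow> nat, where mult u v is the number of
edges between u \<in> A and v \<in> B (values outside A \<times> B are irrelevant).\<close>

definition nbhd :: "('a \<Rightarrow> 'b \<Rightarrow> nat) \<Rightarrow> 'a set \<Rightarrow> 'b set \<Rightarrow> 'a set" where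
  "nbhd mult A B' = {u \<in> A. \<exists>v \<in> B'. mult u v > 0}"

definition deg_into :: "('a \<Rightarrow> 'b \<Rightarrow> nat) \<Rightarrow> 'b set \<Rightarrow> 'a \<Rightarrow> nat" where
  "deg_into mult B' u = (\<Sum>v \<in> B'. mult u v)"

end

theory Submission
  imports Defs
begin

lemma aux:
  fixes A :: "'a set" and B :: "'b set" and mult :: "'a \<Rightarrow> 'b \<Rightarrow> nat" and \<alpha> :: real
  assumes fA: "finite A" and fB: "finite B" and ap: "\<alpha> > 0"
    and H: "\<And>B'. B' \<subseteq> B \<Longrightarrow> B' \<noteq> {} \<Longrightarrow>
           \<exists>u \<in> nbhd mult A B'. real (deg_into mult B' u) < \<alpha>"
  shows "B' \<subseteq> B \<Longrightarrow> \<exists>S \<subseteq> nbhd mult A B'. (B' \<noteq> {} \<longrightarrow> real (card B') < \<alpha> * card S)"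
proof (induction "card B'" arbitrary: B' rule: less_induct)
  case less
  show ?case
  proof (cases "B' = {}")
    case True then show ?thesis by auto
  next
    case False
    have fB': "finite B'" using less.prems fB finite_subset by blast
    obtain u where u: "u \<in> nbhd mult A B'" and du: "real (deg_into mult B' u) < \<alpha>"
      using H[OF less.prems False] by blast
    define D where "D = {v \<in> B'. mult u v > 0}"
    define C where "C = B' - D"
    have Dne: "D \<noteq> {}" using u unfolding nbhd_def D_def by auto
    have DB: "D \<subseteq> B'" unfolding D_def by auto
    have fD: "finite D" using DB fB' finite_subset by blast
    have cardC: "card B' = card C + card D"
      unfolding C_def using card_Diff_subset[OF fD DB] card_mono[OF fB' DB] by auto
    have cDpos: "card D > 0" using Dne fD by auto
    have "card C < card B'" using cardC cDpos by auto
    moreover have "C \<subseteq> B" using less.prems unfolding C_def by auto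
    ultimately obtain S where S: "S \<subseteq> nbhd mult A C"
      and SC: "C \<noteq> {} \<longrightarrow> real (card C) < \<alpha> * card S"
      using less.hyps by blast
    have SC': "real (card C) \<le> \<alpha> * card S"
      using SC ap by (cases "C = {}") auto
    have uS: "u \<notin> S" using S unfolding nbhd_def C_def D_def by auto
    have fS: "finite S" using S fA unfolding nbhd_def by (auto intro: finite_subset)
    have sub: "insert u S \<subseteq> nbhd mult A B'" using S u unfolding nbhd_def C_def by auto
    have "card D = (\<Sum>v\<in>D. 1::nat)" by simp
    also have "\<dots> \<le> (\<Sum>v\<in>D. mult u v)" by (rule sum_mono) (auto simp: D_def)
    also have "\<dots> \<le> (\<Sum>v\<in>B'. mult u v)" by (rule sum_mono2[OF fB' DB]) auto
    finally have "card D \<le> deg_into mult B' u" unfolding deg_into_def .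
    hence "real (card D) < \<alpha>" using du by linarith
    hence "real (card B') < \<alpha> * card (insert u S)"
      using cardC SC' uS fS by (simp add: algebra_simps)
    thus ?thesis using sub by blast
  qed
qed

theorem lemma4:
  fixes A :: "'a set" and B :: "'b set" and mult :: "'a \<Rightarrow> 'b \<Rightarrow> nat" and \<alpha> :: real
  assumes "finite A" and "finite B" and "A \<noteq> {}" and "B \<noteq> {}"
    and "\<alpha> > 0"
    and "\<And>B'. B' \<subseteq> B \<Longrightarrow> B' \<noteq> {} \<Longrightarrow>
           \<exists>u \<in> nbhd mult A B'. real (deg_into mult B' u) < \<alpha>"
  shows "\<alpha> * real (card A) > real (card B)"
proof -
  obtain S where S: "S \<subseteq> nbhd mult A B" and c: "real (card B) < \<alpha> * card S"
    using aux[OF assms(1,2,5,6), of B] assms(4) by blast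
  have "S \<subseteq> A" using S unfolding nbhd_def by auto
  hence "card S \<le> card A" using assms(1) card_mono by blast
  hence "\<alpha> * card S \<le> \<alpha> * card A" using assms(5) by simp
  thus ?thesis using c by linarith
qed

end
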